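(* Let $G$ be a loopless multigraph, let $k \geq 1$ be an integer, and let $M$ be a maximal $k$-edge-colorable subgraph of $G$ (maximal with respect to inclusion of edge sets). Let $F = \{v \in V(G) : d_M(v) \leq k - \mu(v)\}$. Then for every $v \in V(G)$ with $d_M(v) < k$, we have $d_F(v) \leq d_M(v)$.
   Context: A proper $k$-edge-coloring of a loopless multigraph is a map $E(G)\to\{1,\dots,k\}$ giving distinct colors to any two distinct edges sharing at least one endpoint; a multigraph is $k$-edge-colorable if it has one. For vertices $v,w$, $\mu(v,w)=\mu_G(v,w)$ is the number of edges joining $v$ and $w$, and $\mu(v)=\mu_G(v)=\max_{w\in V(G)}\mu_G(v,w)$. For $M\subseteq E(G)$ (viewed as a spanning subgraph), $d_M(v)$ is the number of edges of $M$ incident to $v$. For $F\subseteq V(G)$, $d_F(v)=\sum_{w\in F}\mu_G(v,w)$. *)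

theory Defs
  imports Main
begin

definition loopless_multigraph :: "'a set \<Rightarrow> 'e set \<Rightarrow> ('e \<Rightarrow> 'a set) \<Rightarrow> bool" where
  "loopless_multigraph V E ends \<longleftrightarrow> finite V \<and> finite E \<and>
     (\<forall>e\<in>E. \<exists>u v. u \<in> V \<and> v \<in> V \<and> u \<noteq> v \<and> ends e = {u, v})"

definition proper_edge_coloring :: "('e \<Rightarrow> 'a set) \<Rightarrow> 'e set \<Rightarrow> nat \<Rightarrow> ('e \<Rightarrow> nat) \<Rightarrow> bool" where
  "proper_edge_coloring ends M k c \<longleftrightarrow>
     (\<forall>e\<in>M. c e \<in> {1..k}) \<and>
     (\<forall>e\<in>M. \<forall>e'\<in>M. e \<noteq> e' \<and> ends e \<inter> ends e' \<noteq> {} \<longrightarrow> c e \<noteq> c e')"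

definition edge_colorable :: "('e \<Rightarrow> 'a set) \<Rightarrow> 'e set \<Rightarrow> nat \<Rightarrow> bool" where
  "edge_colorable ends M k \<longleftrightarrow> (\<exists>c. proper_edge_coloring ends M k c)"

definition maximal_colorable_subgraph :: "'e set \<Rightarrow> ('e \<Rightarrow> 'a set) \<Rightarrow> nat \<Rightarrow> 'e set \<Rightarrow> bool" where
  "maximal_colorable_subgraph E ends k M \<longleftrightarrow> M \<subseteq> E \<and> edge_colorable ends M k \<and>
     (\<forall>M'. M \<subset> M' \<and> M' \<subseteq> E \<longrightarrow> \<not> edge_colorable ends M' k)"

definition mult :: "'e set \<Rightarrow> ('e \<Rightarrow> 'a set) \<Rightarrow> 'a \<Rightarrow> 'a \<Rightarrow> nat" where
  "mult E ends v w = card {e\<in>E. ends e = {v, w}}"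

definition mu :: "'a set \<Rightarrow> 'e set \<Rightarrow> ('e \<Rightarrow> 'a set) \<Rightarrow> 'a \<Rightarrow> nat" where
  "mu V E ends v = Max ((\<lambda>w. mult E ends v w) ` V)"

definition deg :: "'e set \<Rightarrow> ('e \<Rightarrow> 'a set) \<Rightarrow> 'a \<Rightarrow> nat" where
  "deg M ends v = card {e\<in>M. v \<in> ends e}"

definition degF :: "'e set \<Rightarrow> ('e \<Rightarrow> 'a set) \<Rightarrow> 'a set \<Rightarrow> 'a \<Rightarrow> nat" where
  "degF E ends F v = (\<Sum>w\<in>F. mult E ends v w)"

end

theory Submission
  imports Defs
begin


definition adjK :: "('e \<Rightarrow> 'a set) \<Rightarrow> 'e set \<Rightarrow> ('e \<times> 'e) set" where
  "adjK ends K = {(e,f). e\<in>K \<and> f\<in>K \<and> ends e \<inter> ends f \<noteq> {}}"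

lemma crossing:
  assumes conn: "\<forall>f\<in>K. (h,f) \<in> (adjK ends K)\<^sup>*" and "h \<in> S" "S \<subseteq> K" "S \<noteq> K"
  shows "\<exists>f\<in>K-S. \<exists>g\<in>S. ends f \<inter> ends g \<noteq> {}"
proof -
  obtain f0 where f0: "f0 \<in> K" "f0 \<notin> S" using assms by auto
  have "(h,f0) \<in> (adjK ends K)\<^sup>*" using conn f0 by auto
  then have "f0 \<in> S \<or> (\<exists>f\<in>K-S. \<exists>g\<in>S. ends f \<inter> ends g \<noteq> {})"
  proof (induction rule: rtrancl_induct)
    case base then show ?case using assms by auto
  next
    case (step y z)
    then show ?case unfolding adjK_def by auto
  qed
  then show ?thesis using f0 by auto
qed

lemma grow:
  assumes fin: "finite K" and two: "\<forall>f\<in>K. card (ends f) = 2" and h: "h \<in> K"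
    and conn: "\<forall>f\<in>K. (h,f) \<in> (adjK ends K)\<^sup>*"
  shows "card (\<Union>(ends ` K)) \<le> card K + 1"
proof -
  have "\<forall>S. h\<in>S \<and> S \<subseteq> K \<and> card (K-S) = n \<and> card (\<Union>(ends ` S)) \<le> card S + 1
          \<longrightarrow> card (\<Union>(ends ` K)) \<le> card K + 1" for n
  proof (induction n)
    case 0
    show ?case
    proof (intro allI impI, elim conjE)
      fix S assume S: "h \<in> S" "S \<subseteq> K" "card (K-S) = 0" "card (\<Union>(ends ` S)) \<le> card S + 1"
      have "K - S = {}" using S(3) fin by simp
      hence "S = K" using S(2) by blast
      thus "card (\<Union>(ends ` K)) \<le> card K + 1" using S(4) by simp
    qed
  next
    case (Suc n)
    show ?case
    proof (intro allI impI, elim conjE)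
      fix S assume S: "h \<in> S" "S \<subseteq> K" "card (K-S) = Suc n" "card (\<Union>(ends ` S)) \<le> card S + 1"
      have "S \<noteq> K" using S(3) by auto
      then obtain f g where fg: "f \<in> K-S" "g \<in> S" "ends f \<inter> ends g \<noteq> {}"
        using crossing[OF conn S(1,2)] by blast
      let ?S = "insert f S"
      have finS: "finite S" using S(2) fin finite_subset by auto
      have fe: "finite (ends f)" "card (ends f) = 2" using two fg(1) card_ge_0_finite by force+
      obtain a where a: "a \<in> ends f" "a \<in> \<Union>(ends ` S)" using fg by auto
      have "\<Union>(ends ` ?S) = (ends f - {a}) \<union> \<Union>(ends ` S)" using a by auto
      hence "card (\<Union>(ends ` ?S)) \<le> card (ends f - {a}) + card (\<Union>(ends ` S))"
        using card_Un_le by metis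
      also have "card (ends f - {a}) = 1" using fe a by simp
      finally have c1: "card (\<Union>(ends ` ?S)) \<le> card ?S + 1"
        using S(4) fg(1) finS by simp
      have "card (K - ?S) = n" using S(3) fg(1)
      proof -
        have "K - ?S = (K - S) - {f}" by auto
        thus ?thesis using S(3) fg(1) by (simp add: card_Diff_singleton)
      qed
      then show "card (\<Union>(ends ` K)) \<le> card K + 1"
        using Suc.IH c1 S fg(1) by auto
    qed
  qed
  moreover have "card (\<Union>(ends ` {h})) \<le> card {h} + 1" using two h by simp
  moreover have "card (K - {h}) = card K - 1" using h fin by simp
  ultimately show ?thesis using h by blast
qed

lemma handshake:
  assumes fin: "finite K" and two: "\<forall>f\<in>K. card (ends f) = 2"
  shows "(\<Sum>x\<in>\<Union>(ends ` K). card {f\<in>K. x \<in> ends f}) = 2 * card K"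
proof -
  let ?W = "\<Union>(ends ` K)"
  have "\<forall>f\<in>K. finite (ends f)" using two by (metis card.infinite zero_neq_numeral)
  hence finW: "finite ?W" using fin by blast
  have "(\<Sum>x\<in>?W. card {f\<in>K. x \<in> ends f}) = (\<Sum>x\<in>?W. \<Sum>f\<in>K. if x \<in> ends f then 1 else 0)"
    using fin by (simp add: sum.If_cases Int_def)
  also have "\<dots> = (\<Sum>f\<in>K. \<Sum>x\<in>?W. if x \<in> ends f then 1 else 0)" by (rule sum.swap)
  also have "\<dots> = (\<Sum>f\<in>K. card (ends f))"
  proof (rule sum.cong)
    fix f assume "f \<in> K"
    hence "?W \<inter> {x. x \<in> ends f} = ends f" by auto
    then show "(\<Sum>x\<in>?W. if x \<in> ends f then 1 else 0) = card (ends f)"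
      using finW by (simp add: sum.If_cases)
  qed simp
  also have "\<dots> = 2 * card K" using two by simp
  finally show ?thesis .
qed

lemma three_leaves:
  assumes fin: "finite K" and two: "\<forall>f\<in>K. card (ends f) = 2" and h: "h \<in> K"
    and conn: "\<forall>f\<in>K. (h,f) \<in> (adjK ends K)\<^sup>*"
    and deg2: "\<forall>x. card {f\<in>K. x \<in> ends f} \<le> 2"
    and dist: "a \<noteq> b" "a \<noteq> d" "b \<noteq> d"
    and leaf: "\<forall>x\<in>{a,b,d}. (\<exists>f\<in>K. x \<in> ends f) \<and> card {f\<in>K. x \<in> ends f} \<le> 1"
  shows False
proof -
  let ?W = "\<Union>(ends ` K)"
  let ?d = "\<lambda>x. card {f\<in>K. x \<in> ends f}"
  have "\<forall>f\<in>K. finite (ends f)" using two by (metis card.infinite zero_neq_numeral)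
  hence finW: "finite ?W" using fin by blast
  have L: "{a,b,d} \<subseteq> ?W" using leaf by auto
  have s1: "(\<Sum>x\<in>?W. ?d x) = (\<Sum>x\<in>?W-{a,b,d}. ?d x) + (\<Sum>x\<in>{a,b,d}. ?d x)"
    using finW L by (simp add: sum.subset_diff)
  have s2: "(\<Sum>x\<in>?W-{a,b,d}. ?d x) \<le> (\<Sum>x\<in>?W-{a,b,d}. 2)" using deg2 by (intro sum_mono) auto
  have s3: "(\<Sum>x\<in>{a,b,d}. ?d x) \<le> (\<Sum>x\<in>{a,b,d}. 1)" using leaf by (intro sum_mono) auto
  have s4: "(\<Sum>x\<in>{a,b,d}. (1::nat)) = 3" using dist by simp
  have s5: "(\<Sum>x\<in>?W-{a,b,d}. (2::nat)) = 2 * card (?W - {a,b,d})" by simp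
  have "2 * card K \<le> 2 * card (?W - {a,b,d}) + 3"
    using handshake[OF fin two] s1 s2 s3 s4 s5 by linarith
  moreover have "card (?W - {a,b,d}) = card ?W - 3" using L finW dist by (simp add: card_Diff_subset)
  moreover have "card ?W \<le> card K + 1" using grow[OF fin two h conn] .
  moreover have "card {a,b,d} = 3" using dist by simp
  hence "card ?W \<ge> 3" using L finW card_mono by metis
  ultimately show False by linarith
qed



locale mg =
  fixes E :: "'e set" and ends :: "'e \<Rightarrow> 'a set" and k :: nat and v :: 'a
  assumes finE: "finite E" and two: "\<forall>e\<in>E. \<exists>a b. a \<noteq> b \<and> ends e = {a,b}"
begin

definition miss :: "'e set \<Rightarrow> ('e \<Rightarrow> nat) \<Rightarrow> 'a \<Rightarrow> nat set" where
  "miss M c x = {g\<in>{1..k}. \<forall>e\<in>M. x \<in> ends e \<longrightarrow> c e \<noteq> g}"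

definition oth :: "'e \<Rightarrow> 'a" where "oth e = (THE w. ends e = {v, w})"

lemma oth: assumes "e \<in> E" "v \<in> ends e" shows "ends e = {v, oth e}" "oth e \<noteq> v"
proof -
  obtain a b where ab: "a \<noteq> b" "ends e = {a,b}" using two assms(1) by blast
  obtain w where w: "ends e = {v,w}" "w \<noteq> v" using ab assms(2) by (metis insert_commute insertE singletonD)
  have "(THE w. ends e = {v, w}) = w"
  proof (rule the_equality)
    show "ends e = {v,w}" by fact
    fix w' assume "ends e = {v,w'}"
    with w show "w' = w" by (metis doubleton_eq_iff)
  qed
  thus "ends e = {v, oth e}" "oth e \<noteq> v" using w unfolding oth_def by auto
qed

primrec chain :: "'e set \<Rightarrow> ('e \<Rightarrow> nat) \<Rightarrow> 'a \<Rightarrow> 'e list \<Rightarrow> bool" where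
  "chain M c p [] = True"
| "chain M c p (e#es) = (e\<in>M \<and> v \<in> ends e \<and> c e \<in> miss M c p \<and> chain M c (oth e) es)"

primrec lastv :: "'a \<Rightarrow> 'e list \<Rightarrow> 'a" where
  "lastv p [] = p"
| "lastv p (e#es) = lastv (oth e) es"

lemma chain_append: "chain M c p (xs @ ys) = (chain M c p xs \<and> chain M c (lastv p xs) ys)"
  by (induction xs arbitrary: p) auto

lemma lastv_append: "lastv p (xs @ ys) = lastv (lastv p xs) ys"
  by (induction xs arbitrary: p) auto

lemma lastv_snoc: "lastv p (xs @ [e]) = oth e"
  by (simp add: lastv_append)

lemma chain_distinct:
  "chain M c p es \<Longrightarrow> \<exists>es'. chain M c p es' \<and> distinct es' \<and> lastv p es' = lastv p es \<and> set es' \<subseteq> set es"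
proof (induction "length es" arbitrary: es rule: less_induct)
  case less
  show ?case
  proof (cases "distinct es")
    case True then show ?thesis using less.prems by blast
  next
    case False
    then obtain xs e ys zs where es: "es = xs @ e # ys @ e # zs"
      using not_distinct_decomp[OF False] by auto
    let ?es = "xs @ e # zs"
    have ch: "chain M c p ?es" using less.prems unfolding es
      by (simp add: chain_append lastv_append)
    have l: "lastv p ?es = lastv p es" unfolding es by (simp add: lastv_append)
    have "length ?es < length es" unfolding es by simp
    from less.hyps[OF this ch] l show ?thesis unfolding es by auto
  qed
qed

lemma chain_mono:
  assumes "chain M c p es"
    and "\<And>e. e \<in> set es \<Longrightarrow> e \<in> M' \<and> c' e = c e \<and> (\<forall>x. c e \<in> miss M c x \<longrightarrow> c e \<in> miss M' c' x)"
  shows "chain M' c' p es"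
  using assms by (induction es arbitrary: p) auto

definition root :: "'e set \<Rightarrow> 'e \<Rightarrow> bool" where
  "root M e0 \<longleftrightarrow> e0 \<in> E \<and> e0 \<notin> M \<and> v \<in> ends e0 \<and> \<not> edge_colorable ends (insert e0 M) k"

definition R :: "'e set \<Rightarrow> ('e \<Rightarrow> nat) \<Rightarrow> 'a set" where
  "R M c = {y. \<exists>e0 es. root M e0 \<and> chain M c (oth e0) es \<and> y = lastv (oth e0) es}"

lemma shift:
  assumes "proper_edge_coloring ends M k c" "M \<subseteq> E" "root M e0"
    "chain M c (oth e0) es" "distinct es" "g \<in> miss M c v" "g \<in> miss M c (lastv (oth e0) es)"
  shows False
  using assms
proof (induction es arbitrary: M c e0)
  case Nil
  have e0: "ends e0 = {v, oth e0}" using oth Nil.prems(3) unfolding root_def by auto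
  have "proper_edge_coloring ends (insert e0 M) k (c(e0 := g))"
    using Nil.prems(1,6,7) e0 Nil.prems(3) unfolding proper_edge_coloring_def miss_def root_def
    by (auto simp: disjoint_iff)
  then show False using Nil.prems(3) unfolding root_def edge_colorable_def by blast
next
  case (Cons e1 es)
  have r: "e0 \<in> E" "e0 \<notin> M" "v \<in> ends e0" "\<not> edge_colorable ends (insert e0 M) k"
    using Cons.prems(3) unfolding root_def by auto
  have e0: "ends e0 = {v, oth e0}" using oth r by auto
  have c1: "e1 \<in> M" "v \<in> ends e1" "c e1 \<in> miss M c (oth e0)" "chain M c (oth e1) es"
    using Cons.prems(4) by auto
  define M' where "M' = insert e0 (M - {e1})"
  define c' where "c' = c(e0 := c e1)"
  have ne: "e1 \<noteq> e0" using r c1 by auto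
  have pr: "proper_edge_coloring ends M k c" by fact
  have pr': "proper_edge_coloring ends M' k c'"
    using pr c1(1,2,3) e0 ne r(2) unfolding proper_edge_coloring_def M'_def c'_def miss_def
    apply (auto simp: disjoint_iff)
    by (metis insert_iff)+
  have M'E: "M' \<subseteq> E" using Cons.prems(2) r unfolding M'_def by auto
  have ins: "insert e1 M' = insert e0 M" using c1 unfolding M'_def by auto
  have root': "root M' e1" unfolding root_def using ins r c1 Cons.prems(2) ne M'_def by auto
  have missmono: "\<And>x g. g \<in> miss M c x \<Longrightarrow> g \<noteq> c e1 \<Longrightarrow> g \<in> miss M' c' x"
    unfolding miss_def M'_def c'_def by auto
  have usedv: "c e1 \<notin> miss M c v" using c1 unfolding miss_def by auto
  have ch': "chain M' c' (oth e1) es"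
  proof (rule chain_mono[OF c1(4)])
    fix e assume e: "e \<in> set es"
    have eM: "e \<in> M" "v \<in> ends e" using chain_append[of M c "oth e1"] c1(4) e
      by (metis in_set_conv_decomp chain.simps(2))+
    have "e \<noteq> e1" using Cons.prems(5) e by auto
    hence "c e \<noteq> c e1" using pr eM c1 unfolding proper_edge_coloring_def by auto
    moreover have "e \<noteq> e0" using eM r by auto
    ultimately show "e \<in> M' \<and> c' e = c e \<and> (\<forall>x. c e \<in> miss M c x \<longrightarrow> c e \<in> miss M' c' x)"
      using eM \<open>e \<noteq> e1\<close> missmono unfolding M'_def c'_def by auto
  qed
  have gne: "g \<noteq> c e1" using usedv Cons.prems(6) by auto
  show False
    apply (rule Cons.IH[OF pr' M'E root' ch'])
    using Cons.prems(5) apply simp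
    using missmono[OF Cons.prems(6) gne] apply simp
    using missmono[OF _ gne] Cons.prems(7) by simp
qed

lemma E1:
  assumes "proper_edge_coloring ends M k c" "M \<subseteq> E" "y \<in> R M c" "g \<in> miss M c v" "g \<in> miss M c y"
  shows False
proof -
  obtain e0 es where "root M e0" "chain M c (oth e0) es" "y = lastv (oth e0) es"
    using assms(3) unfolding R_def by auto
  then obtain es' where "chain M c (oth e0) es'" "distinct es'" "lastv (oth e0) es' = y"
    using chain_distinct by metis
  then show False using shift assms \<open>root M e0\<close> by metis
qed

end


context mg begin

definition HH :: "'e set \<Rightarrow> ('e \<Rightarrow> nat) \<Rightarrow> nat \<Rightarrow> nat \<Rightarrow> 'e set" where
  "HH M c a b = {e\<in>M. c e \<in> {a,b}}"

definition comp :: "'e set \<Rightarrow> ('e \<Rightarrow> nat) \<Rightarrow> nat \<Rightarrow> nat \<Rightarrow> 'e \<Rightarrow> 'e set" where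
  "comp M c a b h = {f. (h,f) \<in> (adjK ends (HH M c a b))\<^sup>*}"

definition sw :: "nat \<Rightarrow> nat \<Rightarrow> nat \<Rightarrow> nat" where
  "sw a b g = (if g = a then b else if g = b then a else g)"

definition swapc :: "'e set \<Rightarrow> nat \<Rightarrow> nat \<Rightarrow> ('e \<Rightarrow> nat) \<Rightarrow> 'e \<Rightarrow> nat" where
  "swapc K a b c = (\<lambda>e. if e \<in> K then sw a b (c e) else c e)"

definition closed :: "'e set \<Rightarrow> 'e set \<Rightarrow> bool" where
  "closed K H \<longleftrightarrow> K \<subseteq> H \<and> (\<forall>f\<in>K. \<forall>g\<in>H. ends f \<inter> ends g \<noteq> {} \<longrightarrow> g \<in> K)"

lemma swap_proper:
  assumes pr: "proper_edge_coloring ends M k c" and ab: "a \<in> {1..k}" "b \<in> {1..k}"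
    and cl: "closed K (HH M c a b)"
  shows "proper_edge_coloring ends M k (swapc K a b c)"
proof -
  have col: "\<forall>e\<in>M. c e \<in> {1..k}" and dist: "\<forall>e\<in>M. \<forall>e'\<in>M. e \<noteq> e' \<and> ends e \<inter> ends e' \<noteq> {} \<longrightarrow> c e \<noteq> c e'"
    using pr unfolding proper_edge_coloring_def by auto
  have KH: "\<And>e. e \<in> K \<Longrightarrow> e \<in> M \<and> c e \<in> {a,b}" using cl unfolding closed_def HH_def by auto
  have c1: "\<forall>e\<in>M. swapc K a b c e \<in> {1..k}"
    using col ab unfolding swapc_def sw_def by auto
  have c2: "swapc K a b c e \<noteq> swapc K a b c e'"
    if e: "e \<in> M" "e' \<in> M" "e \<noteq> e'" "ends e \<inter> ends e' \<noteq> {}" for e e'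
  proof -
    have ne: "c e \<noteq> c e'" using dist e by blast
    consider "e \<in> K" "e' \<in> K" | "e \<in> K" "e' \<notin> K" | "e \<notin> K" "e' \<in> K" | "e \<notin> K" "e' \<notin> K" by blast
    then show ?thesis
    proof cases
      case 1 then show ?thesis using ne unfolding swapc_def sw_def by auto
    next
      case 2
      have "e' \<notin> HH M c a b"
      proof
        assume "e' \<in> HH M c a b"
        then have "e' \<in> K" using cl 2(1) e(4) unfolding closed_def by blast
        then show False using 2 by simp
      qed
      then have "c e' \<notin> {a,b}" using e unfolding HH_def by auto
      moreover have "c e \<in> {a,b}" using KH 2 by auto
      ultimately show ?thesis using 2 unfolding swapc_def sw_def by auto
    next
      case 3
      have "e \<notin> HH M c a b"
      proof
        assume "e \<in> HH M c a b"
        then have "e \<in> K" using cl 3(2) e(4) unfolding closed_def by blast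
        then show False using 3 by simp
      qed
      then have "c e \<notin> {a,b}" using e unfolding HH_def by auto
      moreover have "c e' \<in> {a,b}" using KH 3 by auto
      ultimately show ?thesis using 3 unfolding swapc_def sw_def by auto
    next
      case 4 then show ?thesis using ne unfolding swapc_def by auto
    qed
  qed
  show ?thesis unfolding proper_edge_coloring_def using c1 c2 by blast
qed

lemma swap_other:
  assumes "g \<noteq> a" "g \<noteq> b"
  shows "g \<in> miss M (swapc K a b c) x \<longleftrightarrow> g \<in> miss M c x"
  using assms unfolding miss_def swapc_def sw_def by auto

lemma swap_untouched:
  assumes "\<not> (\<exists>f\<in>K. x \<in> ends f)"
  shows "miss M (swapc K a b c) x = miss M c x"
  using assms unfolding miss_def swapc_def by auto

lemma swap_touched:
  assumes "closed K (HH M c a b)" "\<exists>f\<in>K. x \<in> ends f" "b \<in> miss M c x" "a \<in> {1..k}" "a \<noteq> b"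
  shows "a \<in> miss M (swapc K a b c) x"
proof -
  obtain f where f: "f \<in> K" "x \<in> ends f" using assms(2) by auto
  have "swapc K a b c e \<noteq> a" if e: "e \<in> M" "x \<in> ends e" for e
  proof
    assume eq: "swapc K a b c e = a"
    show False
    proof (cases "e \<in> K")
      case True
      then have "c e = b" using eq assms(5) unfolding swapc_def sw_def by (auto split: if_splits)
      then show False using assms(3) e unfolding miss_def by auto
    next
      case False
      then have "c e = a" using eq unfolding swapc_def by auto
      then have "e \<in> HH M c a b" using e unfolding HH_def by auto
      then have "e \<in> K" using assms(1) f e unfolding closed_def by blast
      then show False using False by simp
    qed
  qed
  then show ?thesis using assms(4) unfolding miss_def by auto
qed

lemma adj_sym: "(e,f) \<in> adjK ends K \<Longrightarrow> (f,e) \<in> adjK ends K"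
  unfolding adjK_def by auto

lemma rt_sym: "(h,f) \<in> (adjK ends K)\<^sup>* \<Longrightarrow> (f,h) \<in> (adjK ends K)\<^sup>*"
proof (induction rule: rtrancl_induct)
  case base then show ?case by simp
next
  case (step y z)
  then show ?case by (meson adj_sym converse_rtrancl_into_rtrancl)
qed

lemma comp_sub: "h \<in> HH M c a b \<Longrightarrow> comp M c a b h \<subseteq> HH M c a b"
proof
  fix f assume h: "h \<in> HH M c a b" and "f \<in> comp M c a b h"
  then have "(h,f) \<in> (adjK ends (HH M c a b))\<^sup>*" unfolding comp_def by auto
  then show "f \<in> HH M c a b" using h
    by (induction rule: rtrancl_induct) (auto simp: adjK_def)
qed

lemma comp_self: "h \<in> comp M c a b h" unfolding comp_def by auto

lemma comp_closed: assumes "h \<in> HH M c a b" shows "closed (comp M c a b h) (HH M c a b)"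
  unfolding closed_def
proof (intro conjI ballI impI)
  show "comp M c a b h \<subseteq> HH M c a b" using comp_sub[OF assms] .
  fix f g assume f: "f \<in> comp M c a b h" and g: "g \<in> HH M c a b" and i: "ends f \<inter> ends g \<noteq> {}"
  have "f \<in> HH M c a b" using f comp_sub[OF assms] by auto
  then have "(f,g) \<in> adjK ends (HH M c a b)" using g i unfolding adjK_def by auto
  then show "g \<in> comp M c a b h" using f unfolding comp_def by (auto intro: rtrancl_into_rtrancl)
qed

lemma comp_trans: "f \<in> comp M c a b h \<Longrightarrow> comp M c a b f \<subseteq> comp M c a b h"
  unfolding comp_def by auto

lemma comp_sym: "f \<in> comp M c a b h \<Longrightarrow> h \<in> comp M c a b f"
  unfolding comp_def using rt_sym by auto

lemma comp_conn:
  assumes "h \<in> HH M c a b"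
  shows "\<forall>f\<in>comp M c a b h. (h,f) \<in> (adjK ends (comp M c a b h))\<^sup>*"
proof
  fix f assume "f \<in> comp M c a b h"
  then have "(h,f) \<in> (adjK ends (HH M c a b))\<^sup>*" unfolding comp_def by auto
  then show "(h,f) \<in> (adjK ends (comp M c a b h))\<^sup>*"
  proof (induction rule: rtrancl_induct)
    case base then show ?case by simp
  next
    case (step y z)
    then have "y \<in> comp M c a b h" "z \<in> comp M c a b h" unfolding comp_def
      by (auto intro: rtrancl_into_rtrancl)
    then have "(y,z) \<in> adjK ends (comp M c a b h)" using step(2) unfolding adjK_def by auto
    then show ?case by (rule rtrancl_into_rtrancl[OF step(3)])
  qed
qed

lemma deg_H:
  assumes "proper_edge_coloring ends M k c" "M \<subseteq> E"
  shows "card {f\<in>HH M c a b. x \<in> ends f} \<le> 2"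
    and "a \<in> miss M c x \<Longrightarrow> card {f\<in>HH M c a b. x \<in> ends f} \<le> 1"
    and "b \<in> miss M c x \<Longrightarrow> card {f\<in>HH M c a b. x \<in> ends f} \<le> 1"
proof -
  let ?S = "{f\<in>HH M c a b. x \<in> ends f}"
  have inj: "inj_on c ?S" using assms(1) unfolding inj_on_def proper_edge_coloring_def HH_def by blast
  have "card ?S = card (c ` ?S)" using inj by (simp add: card_image)
  also have "\<dots> \<le> card {a,b}" by (rule card_mono) (auto simp: HH_def)
  also have "\<dots> \<le> 2" by (simp add: card_insert_le_m1)
  finally show "card ?S \<le> 2" .
  show "card ?S \<le> 1" if "a \<in> miss M c x"
  proof -
    have "c ` ?S \<subseteq> {b}" using that unfolding HH_def miss_def by auto
    then have "card (c ` ?S) \<le> card {b}" by (intro card_mono) auto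
    then have "card (c ` ?S) \<le> 1" by simp
    then show ?thesis using inj by (simp add: card_image)
  qed
  show "card ?S \<le> 1" if "b \<in> miss M c x"
  proof -
    have "c ` ?S \<subseteq> {a}" using that unfolding HH_def miss_def by auto
    then have "card (c ` ?S) \<le> card {a}" by (intro card_mono) auto
    then have "card (c ` ?S) \<le> 1" by simp
    then show ?thesis using inj by (simp add: card_image)
  qed
qed

end


context mg begin

lemma lastv_ne: "chain M c p es \<Longrightarrow> M \<subseteq> E \<Longrightarrow> p \<noteq> v \<Longrightarrow> lastv p es \<noteq> v"
  by (induction es arbitrary: p) (auto dest: oth(2))

lemma R_ne: assumes "y \<in> R M c" "M \<subseteq> E" shows "y \<noteq> v"
proof -
  obtain e0 es where "root M e0" "chain M c (oth e0) es" "y = lastv (oth e0) es"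
    using assms(1) unfolding R_def by auto
  moreover have "oth e0 \<noteq> v" using calculation(1) oth(2) unfolding root_def by auto
  ultimately show ?thesis using lastv_ne assms(2) by auto
qed

lemma chain_set: "chain M c p es \<Longrightarrow> e \<in> set es \<Longrightarrow> e \<in> M \<and> v \<in> ends e"
  by (induction es arbitrary: p) auto

lemma E2:
  assumes pr: "proper_edge_coloring ends M k c" and ME: "M \<subseteq> E"
    and av: "a \<in> miss M c v" and yR: "y \<in> R M c" and zR: "z \<in> R M c" and yz: "y \<noteq> z"
    and b_y: "b \<in> miss M c y" and b_z: "b \<in> miss M c z"
  shows False
proof -
  have col: "\<forall>e\<in>M. c e \<in> {1..k}" and dist: "\<forall>e\<in>M. \<forall>e'\<in>M. e \<noteq> e' \<and> ends e \<inter> ends e' \<noteq> {} \<longrightarrow> c e \<noteq> c e'"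
    using pr unfolding proper_edge_coloring_def by auto
  have ak: "a \<in> {1..k}" and bk: "b \<in> {1..k}" using av b_y unfolding miss_def by auto
  have ab: "a \<noteq> b" using E1[OF pr ME yR] av b_y by blast
  obtain eb where eb: "eb \<in> M" "v \<in> ends eb" "c eb = b"
  proof -
    have "b \<notin> miss M c v" using E1[OF pr ME yR] b_y by blast
    then show ?thesis using that bk unfolding miss_def by auto
  qed
  have ebu: "e = eb" if "e \<in> M" "v \<in> ends e" "c e = b" for e
  proof (rule ccontr)
    assume ne: "e \<noteq> eb"
    have "ends e \<inter> ends eb \<noteq> {}" using that eb by blast
    then show False using dist that eb ne by metis
  qed
  have nota: "c e \<noteq> a" if "e \<in> M" "v \<in> ends e" for e using av that unfolding miss_def by auto
  define P where "P n \<longleftrightarrow> (\<exists>e0 es. root M e0 \<and> chain M c (oth e0) es \<and> b \<in> miss M c (lastv (oth e0) es) \<and> length es = n)" for n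
  have "\<exists>n. P n" using yR b_y unfolding R_def P_def by auto
  then have Pmin: "P (LEAST n. P n)" by (rule LeastI_ex)
  then obtain e0u Lu where u0: "root M e0u" "chain M c (oth e0u) Lu" "b \<in> miss M c (lastv (oth e0u) Lu)"
     "length Lu = (LEAST n. P n)" unfolding P_def by auto
  define u where "u = lastv (oth e0u) Lu"
  have uR: "u \<in> R M c" unfolding R_def u_def using u0 by auto
  have bu: "b \<in> miss M c u" using u0 u_def by simp
  have ebLu: "eb \<notin> set Lu"
  proof
    assume "eb \<in> set Lu"
    then obtain xs ys where Lu: "Lu = xs @ eb # ys" by (meson split_list)
    have "chain M c (oth e0u) xs" "c eb \<in> miss M c (lastv (oth e0u) xs)"
      using u0(2) unfolding Lu by (auto simp: chain_append)
    then have "P (length xs)" unfolding P_def using u0(1) eb(3) by auto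
    moreover have "length xs < (LEAST n. P n)" using u0(4) Lu by simp
    ultimately show False using not_less_Least by blast
  qed
  define u' where "u' = (if u = y then z else y)"
  have u'R: "u' \<in> R M c" and bu': "b \<in> miss M c u'" and uu': "u \<noteq> u'"
    using yR zR b_y b_z yz unfolding u'_def by auto
  obtain e0' L0 where "root M e0'" "chain M c (oth e0') L0" "u' = lastv (oth e0') L0"
    using u'R unfolding R_def by auto
  then obtain L' where L': "root M e0'" "chain M c (oth e0') L'" "distinct L'" "lastv (oth e0') L' = u'"
    using chain_distinct by metis
  have vu: "v \<noteq> u" "v \<noteq> u'" using R_ne[OF uR ME] R_ne[OF u'R ME] by auto
  obtain hu where hu: "hu \<in> M" "u \<in> ends hu" "c hu = a"
  proof -
    have "a \<notin> miss M c u" using E1[OF pr ME uR] av by blast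
    then show ?thesis using that ak unfolding miss_def by auto
  qed
  obtain hu' where hu': "hu' \<in> M" "u' \<in> ends hu'" "c hu' = a"
  proof -
    have "a \<notin> miss M c u'" using E1[OF pr ME u'R] av by blast
    then show ?thesis using that ak unfolding miss_def by auto
  qed
  let ?H = "HH M c a b"
  have Hs: "hu \<in> ?H" "hu' \<in> ?H" "eb \<in> ?H" using hu hu' eb unfolding HH_def by auto
  have unv: "f = eb" if "f \<in> ?H" "v \<in> ends f" for f
    using that av ebu unfolding HH_def miss_def by auto
  have unu: "f = hu" if "f \<in> ?H" "u \<in> ends f" for f
  proof -
    have "c f = a" using that bu unfolding HH_def miss_def by auto
    show ?thesis
    proof (rule ccontr)
      assume ne: "f \<noteq> hu"
      have "ends f \<inter> ends hu \<noteq> {}" using that hu by blast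
      then show False using dist that hu ne \<open>c f = a\<close> unfolding HH_def by auto
    qed
  qed
  have unu': "f = hu'" if "f \<in> ?H" "u' \<in> ends f" for f
  proof -
    have "c f = a" using that bu' unfolding HH_def miss_def by auto
    show ?thesis
    proof (rule ccontr)
      assume ne: "f \<noteq> hu'"
      have "ends f \<inter> ends hu' \<noteq> {}" using that hu' by blast
      then show False using dist that hu' ne \<open>c f = a\<close> unfolding HH_def by auto
    qed
  qed
  have chsw: "chain M (swapc K a b c) p es"
    if "chain M c p es" "eb \<notin> set es" "\<not> (\<exists>f\<in>K. v \<in> ends f)" for K p es
  proof (rule chain_mono[OF that(1)])
    fix e assume e: "e \<in> set es"
    have em: "e \<in> M" "v \<in> ends e" using chain_set[OF that(1) e] by auto
    have "c e \<noteq> a" using nota em by auto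
    moreover have "c e \<noteq> b" using ebu em e that(2) by auto
    moreover have "e \<notin> K" using that(3) em by auto
    ultimately show "e \<in> M \<and> swapc K a b c e = c e \<and>
      (\<forall>x. c e \<in> miss M c x \<longrightarrow> c e \<in> miss M (swapc K a b c) x)"
      using em swap_other[of "c e" a b M K c] unfolding swapc_def by auto
  qed
  have caseA: False if cl: "closed K ?H" and nv: "\<not> (\<exists>f\<in>K. v \<in> ends f)" and tu: "\<exists>f\<in>K. u \<in> ends f" for K
  proof -
    let ?c = "swapc K a b c"
    have pr': "proper_edge_coloring ends M k ?c" using swap_proper[OF pr ak bk cl] .
    have "chain M ?c (oth e0u) Lu" using chsw[OF u0(2) ebLu nv] .
    then have "u \<in> R M ?c" unfolding R_def u_def using u0(1) by auto
    moreover have "a \<in> miss M ?c u" using swap_touched[OF cl tu bu ak ab] .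
    moreover have "a \<in> miss M ?c v" using swap_untouched[OF nv] av by simp
    ultimately show False using E1[OF pr' ME] by blast
  qed
  have caseB: False if cl: "closed K ?H" and nv: "\<not> (\<exists>f\<in>K. v \<in> ends f)"
     and nu: "\<not> (\<exists>f\<in>K. u \<in> ends f)" and tu': "\<exists>f\<in>K. u' \<in> ends f" for K
  proof -
    let ?c = "swapc K a b c"
    have pr': "proper_edge_coloring ends M k ?c" using swap_proper[OF pr ak bk cl] .
    have "u' \<in> R M ?c"
    proof (cases "eb \<in> set L'")
      case False
      have "chain M ?c (oth e0') L'" using chsw[OF L'(2) False nv] .
      then show ?thesis unfolding R_def using L'(1,4) by auto
    next
      case True
      then obtain xs ys where L'eq: "L' = xs @ eb # ys" by (meson split_list)
      have ys: "chain M c (oth eb) ys" "eb \<notin> set ys" "lastv (oth eb) ys = u'"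
        using L'(2,3,4) unfolding L'eq by (auto simp: chain_append lastv_append)
      have c1: "chain M ?c (oth e0u) Lu" using chsw[OF u0(2) ebLu nv] .
      have ebK: "eb \<notin> K" using nv eb by auto
      have c2: "chain M ?c u [eb]"
        using eb ebK bu swap_untouched[OF nu, of M a b c] unfolding swapc_def by auto
      have c3: "chain M ?c (oth eb) ys" using chsw[OF ys(1,2) nv] .
      have "chain M ?c (oth e0u) (Lu @ [eb] @ ys)"
        using c1 c2 c3 by (simp add: chain_append u_def[symmetric])
      moreover have "lastv (oth e0u) (Lu @ [eb] @ ys) = u'"
        using ys(3) by (simp add: lastv_append)
      ultimately show ?thesis unfolding R_def using u0(1) by blast
    qed
    moreover have "a \<in> miss M ?c u'" using swap_touched[OF cl tu' bu' ak ab] .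
    moreover have "a \<in> miss M ?c v" using swap_untouched[OF nv] av by simp
    ultimately show False using E1[OF pr' ME] by blast
  qed
  let ?Ku = "comp M c a b hu" and ?Ku' = "comp M c a b hu'"
  have clu: "closed ?Ku ?H" using comp_closed[OF Hs(1)] .
  have clu': "closed ?Ku' ?H" using comp_closed[OF Hs(2)] .
  have tuKu: "\<exists>f\<in>?Ku. u \<in> ends f" using comp_self hu by blast
  have tuKu': "\<exists>f\<in>?Ku'. u' \<in> ends f" using comp_self hu' by blast
  show False
  proof (cases "\<exists>f\<in>?Ku. v \<in> ends f")
    case False
    then show ?thesis using caseA[OF clu False tuKu] by simp
  next
    case True
    then have ebKu: "eb \<in> ?Ku" using unv comp_sub[OF Hs(1)] by blast
    show ?thesis
    proof (cases "\<exists>f\<in>?Ku'. v \<in> ends f")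
      case True
      then have ebKu': "eb \<in> ?Ku'" using unv comp_sub[OF Hs(2)] by blast
      have "hu \<in> comp M c a b eb" using comp_sym[OF ebKu] .
      then have huKu': "hu \<in> ?Ku'" using comp_trans[OF ebKu'] by blast
      have finM: "finite M" using ME finE by (rule finite_subset)
      have KM: "?Ku' \<subseteq> M" using comp_sub[OF Hs(2)] unfolding HH_def by auto
      have finK: "finite ?Ku'" using finM KM by (rule finite_subset[rotated])
      have twoK: "\<forall>f\<in>?Ku'. card (ends f) = 2"
      proof
        fix f assume "f \<in> ?Ku'"
        then have "f \<in> E" using KM ME by auto
        then show "card (ends f) = 2" using two by auto
      qed
      have degK: "card {f\<in>?Ku'. x \<in> ends f} \<le> card {f\<in>?H. x \<in> ends f}" for x
      proof (rule card_mono)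
        show "finite {f\<in>?H. x \<in> ends f}" using finM unfolding HH_def by simp
        show "{f\<in>?Ku'. x \<in> ends f} \<subseteq> {f\<in>?H. x \<in> ends f}" using comp_sub[OF Hs(2)] by auto
      qed
      have d2: "\<forall>x. card {f\<in>?Ku'. x \<in> ends f} \<le> 2"
        using deg_H(1)[OF pr ME] degK le_trans by blast
      have lv: "card {f\<in>?Ku'. v \<in> ends f} \<le> 1" using deg_H(2)[OF pr ME av, where b=b] degK[of v] by linarith
      have lu: "card {f\<in>?Ku'. u \<in> ends f} \<le> 1" using deg_H(3)[OF pr ME bu, where a=a] degK[of u] by linarith
      have lu': "card {f\<in>?Ku'. u' \<in> ends f} \<le> 1" using deg_H(3)[OF pr ME bu', where a=a] degK[of u'] by linarith
      have leaf: "\<forall>x\<in>{v,u,u'}. (\<exists>f\<in>?Ku'. x \<in> ends f) \<and> card {f\<in>?Ku'. x \<in> ends f} \<le> 1"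
        using lv lu lu' ebKu' huKu' tuKu' eb(2) hu(2) by blast
      show False
        by (rule three_leaves[OF finK twoK comp_self comp_conn[OF Hs(2)] d2 vu(1) vu(2) uu' leaf])
    next
      case False
      have "\<not> (\<exists>f\<in>?Ku'. u \<in> ends f)"
      proof
        assume "\<exists>f\<in>?Ku'. u \<in> ends f"
        then have "hu \<in> ?Ku'" using unu comp_sub[OF Hs(2)] by blast
        then have "eb \<in> ?Ku'" using comp_trans ebKu by blast
        then show False using False eb(2) by blast
      qed
      then show ?thesis using caseB[OF clu' False _ tuKu'] by simp
    qed
  qed
qed

end


theorem mainTheorem1:
  fixes V :: "'a set" and E :: "'e set" and ends :: "'e \<Rightarrow> 'a set" and k :: nat and M :: "'e set"
  assumes "loopless_multigraph V E ends"
    and "k \<ge> 1"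
    and "maximal_colorable_subgraph E ends k M"
  defines "F \<equiv> {v\<in>V. deg M ends v + mu V E ends v \<le> k}"
  shows "\<forall>v\<in>V. deg M ends v < k \<longrightarrow> degF E ends F v \<le> deg M ends v"
proof (intro ballI impI)
  fix v assume vV: "v \<in> V" and dv: "deg M ends v < k"
  have finV: "finite V" and finE: "finite E"
    and ed: "\<forall>e\<in>E. \<exists>u w. u \<in> V \<and> w \<in> V \<and> u \<noteq> w \<and> ends e = {u, w}"
    using assms(1) unfolding loopless_multigraph_def by auto
  interpret mg E ends k v
    using finE ed by unfold_locales blast+
  have ME: "M \<subseteq> E" and colM: "edge_colorable ends M k"
    and maxl: "\<And>M'. M \<subset> M' \<Longrightarrow> M' \<subseteq> E \<Longrightarrow> \<not> edge_colorable ends M' k"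
    using assms(3) unfolding maximal_colorable_subgraph_def by auto
  obtain c where pr: "proper_edge_coloring ends M k c" using colM unfolding edge_colorable_def by auto
  have col: "\<forall>e\<in>M. c e \<in> {1..k}" using pr unfolding proper_edge_coloring_def by auto
  have finM: "finite M" using ME finE by (rule finite_subset)
  have misscard: "k \<le> card (miss M c y) + deg M ends y" for y
  proof -
    have "{1..k} \<subseteq> miss M c y \<union> c ` {e\<in>M. y \<in> ends e}" unfolding miss_def by auto
    then have "card {1..k} \<le> card (miss M c y \<union> c ` {e\<in>M. y \<in> ends e})"
      by (rule card_mono[rotated]) (auto simp: miss_def finM)
    also have "\<dots> \<le> card (miss M c y) + card (c ` {e\<in>M. y \<in> ends e})" by (rule card_Un_le)
    also have "card (c ` {e\<in>M. y \<in> ends e}) \<le> card {e\<in>M. y \<in> ends e}" by (rule card_image_le) (simp add: finM)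
    finally show ?thesis unfolding deg_def by simp
  qed
  have finmiss: "finite (miss M c y)" for y unfolding miss_def by simp
  obtain a where av: "a \<in> miss M c v"
  proof -
    have "card (miss M c v) > 0" using misscard[of v] dv by linarith
    then show ?thesis using that by (metis card.empty ex_in_conv less_irrefl)
  qed
  let ?Y = "R M c"
  have rootY: "oth e \<in> ?Y" if "e \<in> E" "e \<notin> M" "v \<in> ends e" for e
  proof -
    have "M \<subset> insert e M" "insert e M \<subseteq> E" using that ME by auto
    then have "root M e" using maxl that unfolding root_def by blast
    then show ?thesis unfolding R_def by (auto intro!: exI[of _ "[]"])
  qed
  have closY: "oth e \<in> ?Y" if H: "y \<in> ?Y" "e \<in> M" "v \<in> ends e" "c e \<in> miss M c y" for y e
  proof -
    obtain e0 es where "root M e0" "chain M c (oth e0) es" "y = lastv (oth e0) es"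
      using H(1) unfolding R_def by auto
    then have "chain M c (oth e0) (es @ [e])" "lastv (oth e0) (es @ [e]) = oth e"
      using H by (auto simp: chain_append lastv_snoc)
    then show ?thesis unfolding R_def using \<open>root M e0\<close> by (metis (mono_tags, lifting) mem_Collect_eq)
  qed
  have endsiff: "ends e = {v,w} \<longleftrightarrow> v \<in> ends e \<and> oth e = w" if "e \<in> E" for e w
  proof
    assume h: "ends e = {v,w}"
    then have "v \<in> ends e" by auto
    then have "ends e = {v, oth e}" "oth e \<noteq> v" using oth that by auto
    then have "oth e \<in> {v,w}" using h by blast
    then show "v \<in> ends e \<and> oth e = w" using \<open>oth e \<noteq> v\<close> \<open>v \<in> ends e\<close> by blast
  next
    assume "v \<in> ends e \<and> oth e = w"
    then show "ends e = {v,w}" using oth that by auto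
  qed
  have multX: "card {e\<in>X. ends e = {v,w}} = card {e\<in>X. v \<in> ends e \<and> oth e = w}" if "X \<subseteq> E" for X w
    using endsiff that by (metis (no_types, lifting) subsetD)
  have sumX: "(\<Sum>w\<in>S. card {e\<in>X. v \<in> ends e \<and> oth e = w}) = card {e\<in>X. v \<in> ends e \<and> oth e \<in> S}"
    if "finite S" "finite X" for S X
  proof -
    have "{e\<in>X. v \<in> ends e \<and> oth e \<in> S} = (\<Union>w\<in>S. {e\<in>X. v \<in> ends e \<and> oth e = w})" by auto
    moreover have "card (\<Union>w\<in>S. {e\<in>X. v \<in> ends e \<and> oth e = w}) = (\<Sum>w\<in>S. card {e\<in>X. v \<in> ends e \<and> oth e = w})"
      by (rule card_UN_disjoint) (use that in auto)
    ultimately show ?thesis by simp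
  qed
  have finF: "finite F" using finV unfolding F_def by simp
  have degF_eq: "degF E ends F v = (\<Sum>w\<in>F - ?Y. mult E ends v w) + (\<Sum>w\<in>F \<inter> ?Y. mult E ends v w)"
    unfolding degF_def using finF by (metis add.commute sum.Int_Diff)
  have outY: "mult E ends v w = card {e\<in>M. v \<in> ends e \<and> oth e = w}" if "w \<notin> ?Y" for w
  proof -
    have "{e\<in>E. ends e = {v,w}} = {e\<in>M. ends e = {v,w}}"
    proof (intro equalityI subsetI)
      fix e assume e: "e \<in> {e\<in>E. ends e = {v,w}}"
      have "e \<in> M"
      proof (rule ccontr)
        assume "e \<notin> M"
        then have "oth e \<in> ?Y" using rootY e by auto
        moreover have "oth e = w" using endsiff e by auto
        ultimately show False using that by simp
      qed
      then show "e \<in> {e\<in>M. ends e = {v,w}}" using e by auto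
    qed (use ME in auto)
    then show ?thesis unfolding mult_def using multX[OF ME] by simp
  qed
  have part1: "(\<Sum>w\<in>F - ?Y. mult E ends v w) = card {e\<in>M. v \<in> ends e \<and> oth e \<in> F - ?Y}"
    using outY sumX[of "F - ?Y" M] finF finM by simp
  have inYF: "mult E ends v w \<le> card (miss M c w)" if "w \<in> F" for w
  proof -
    have wV: "w \<in> V" and wF: "deg M ends w + mu V E ends w \<le> k" using that unfolding F_def by auto
    have "mult E ends w v \<le> mu V E ends w" unfolding mu_def using vV finV by (intro Max_ge) auto
    moreover have "mult E ends w v = mult E ends v w" unfolding mult_def by (simp add: insert_commute)
    ultimately show ?thesis using wF misscard[of w] by linarith
  qed
  let ?C = "\<Union>w\<in>F \<inter> ?Y. miss M c w"
  have "(\<Sum>w\<in>F \<inter> ?Y. mult E ends v w) \<le> (\<Sum>w\<in>F \<inter> ?Y. card (miss M c w))"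
    using inYF by (intro sum_mono) auto
  also have "\<dots> = card ?C"
  proof (rule card_UN_disjoint[symmetric])
    show "finite (F \<inter> ?Y)" using finF by simp
    show "\<forall>i\<in>F \<inter> ?Y. finite (miss M c i)" using finmiss by simp
    show "\<forall>i\<in>F \<inter> ?Y. \<forall>j\<in>F \<inter> ?Y. i \<noteq> j \<longrightarrow> miss M c i \<inter> miss M c j = {}"
      using E2[OF pr ME av] by blast
  qed
  also have "card ?C \<le> card {e\<in>M. v \<in> ends e \<and> oth e \<in> ?Y}"
  proof -
    have "?C \<subseteq> c ` {e\<in>M. v \<in> ends e \<and> oth e \<in> ?Y}"
    proof
      fix g assume "g \<in> ?C"
      then obtain w where w: "w \<in> ?Y" "g \<in> miss M c w" by auto
      have "g \<notin> miss M c v" using E1[OF pr ME w(1)] w(2) by blast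
      moreover have "g \<in> {1..k}" using w(2) unfolding miss_def by auto
      ultimately obtain e where e: "e \<in> M" "v \<in> ends e" "c e = g" unfolding miss_def by auto
      then have "oth e \<in> ?Y" using closY w by auto
      then show "g \<in> c ` {e\<in>M. v \<in> ends e \<and> oth e \<in> ?Y}" using e by auto
    qed
    then have "card ?C \<le> card (c ` {e\<in>M. v \<in> ends e \<and> oth e \<in> ?Y})"
      by (rule card_mono[rotated]) (simp add: finM)
    also have "\<dots> \<le> card {e\<in>M. v \<in> ends e \<and> oth e \<in> ?Y}" by (rule card_image_le) (simp add: finM)
    finally show ?thesis .
  qed
  finally have part2: "(\<Sum>w\<in>F \<inter> ?Y. mult E ends v w) \<le> card {e\<in>M. v \<in> ends e \<and> oth e \<in> ?Y}" .
  have "card {e\<in>M. v \<in> ends e \<and> oth e \<in> F - ?Y} + card {e\<in>M. v \<in> ends e \<and> oth e \<in> ?Y}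
      = card ({e\<in>M. v \<in> ends e \<and> oth e \<in> F - ?Y} \<union> {e\<in>M. v \<in> ends e \<and> oth e \<in> ?Y})"
    by (rule card_Un_disjoint[symmetric]) (auto simp: finM)
  also have "\<dots> \<le> card {e\<in>M. v \<in> ends e}" by (rule card_mono) (auto simp: finM)
  finally show "degF E ends F v \<le> deg M ends v"
    using degF_eq part1 part2 unfolding deg_def by linarith
qed

end
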